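(* Let $C\subseteq 2^X$ be an ample class and let $r:C\to X(C)$ be a bijection. The following are equivalent: (R1) for all distinct $c',c''\in C$, $c'|(r(c')\cup r(c''))\ne c''|(r(c')\cup r(c''))$; (R2) for every sample $s$ realizable by $C$ there is a unique $c\in C$ consistent with $s$ such that $r(c)\subseteq\mathrm{dom}(s)$; (R3) for every cube $B$ of $2^X$, the map $c\mapsto r(c)\cap\mathrm{supp}(B)$ from $C\cap B$ to $X(C\cap B)$ is injective; (R4) for all distinct $c',c''\in C$, $c'|(r(c')\Delta r(c''))\ne c''|(r(c')\Delta r(c''))$. Moreover, any map $r:C\to X(C)$ satisfying (R4) is bijective and is therefore a representation map. Furthermore, if $r$ is a representation map for $C$, then there exists an unlabeled sample compression scheme for $C$ of size equal to the VC-dimension of $C$.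
   Context: $X$ is a finite set; concepts $c\subseteq X$ are identified with characteristic functions, $c|Y$ is restriction to $Y$, $C|Y=\{c|Y:c\in C\}$. $Y$ is shattered by $C$ if $C|Y=2^Y$; VC-dimension is the maximum size of a shattered set. A cube of $2^X$ is $\{T\cup Z:Z\subseteq Y\}$ with $Y\subseteq X$, $T\subseteq X\setminus Y$, support $\mathrm{supp}=Y$. $C$ is ample if every shattered set is the support of a cube contained in $C$; then $X(C)$ is the family of shattered sets and $|X(C)|=|C|$ (for a cube $B$, $C\cap B$ is again ample). A representation map is a bijection $r:C\to X(C)$ satisfying (R1). A labeled sample is a sequence $s=(x_1,y_1),\dots,(x_m,y_m)$, $x_i\in X$, $y_i\in\{0,1\}$, with $\mathrm{dom}(s)=\{x_1,\dots,x_m\}$; $c$ is consistent with $s$ if $c(x_i)=y_i$ for all $i$; $s$ is realizable by $C$ if some $c\in C$ is consistent with it; $\mathrm{RS}(C)$ is the set of realizable samples. An unlabeled sample compression scheme of size $k$ is a pair $\alpha:\mathrm{RS}(C)\to\{Z\subseteq X:|Z|\le k\}$, $\beta:\alpha(\mathrm{RS}(C))\to C$ with $\alpha(s)\subseteq\mathrm{dom}(s)$ and $\beta(\alpha(s))$ consistent with $s$ for all $s\in\mathrm{RS}(C)$. *)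

theory Defs
  imports Main
begin

text \<open>Concepts over a finite ground set X are represented as subsets of X
(identified with their characteristic functions); restriction c|Y is c \<inter> Y.\<close>

definition restr :: "'a set \<Rightarrow> 'a set \<Rightarrow> 'a set" where
  "restr c Y = c \<inter> Y"

definition restr_class :: "'a set set \<Rightarrow> 'a set \<Rightarrow> 'a set set" where
  "restr_class C Y = (\<lambda>c. restr c Y) ` C"

definition shatters :: "'a set set \<Rightarrow> 'a set \<Rightarrow> bool" where
  "shatters C Y \<longleftrightarrow> restr_class C Y = Pow Y"

definition shattered_sets :: "'a set \<Rightarrow> 'a set set \<Rightarrow> 'a set set" where
  "shattered_sets X C = {Y. Y \<subseteq> X \<and> shatters C Y}"

definition vc_dim :: "'a set \<Rightarrow> 'a set set \<Rightarrow> nat" where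
  "vc_dim X C = Max (card ` shattered_sets X C)"

definition cube :: "'a set \<Rightarrow> 'a set \<Rightarrow> 'a set set" where
  "cube Y T = {T \<union> Z | Z. Z \<subseteq> Y}"

definition is_cube_of :: "'a set \<Rightarrow> 'a set \<Rightarrow> 'a set \<Rightarrow> bool" where
  "is_cube_of X Y T \<longleftrightarrow> Y \<subseteq> X \<and> T \<subseteq> X - Y"

definition ample :: "'a set \<Rightarrow> 'a set set \<Rightarrow> bool" where
  "ample X C \<longleftrightarrow> (\<forall>Y \<in> shattered_sets X C. \<exists>T. is_cube_of X Y T \<and> cube Y T \<subseteq> C)"

type_synonym 'a sample = "('a \<times> bool) list"

definition sdom :: "'a sample \<Rightarrow> 'a set" where
  "sdom s = fst ` set s"

definition consistent :: "'a set \<Rightarrow> 'a sample \<Rightarrow> bool" where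
  "consistent c s \<longleftrightarrow> (\<forall>(x, y) \<in> set s. (x \<in> c) = y)"

definition RS :: "'a set \<Rightarrow> 'a set set \<Rightarrow> 'a sample set" where
  "RS X C = {s. sdom s \<subseteq> X \<and> (\<exists>c \<in> C. consistent c s)}"

definition R1 :: "'a set set \<Rightarrow> ('a set \<Rightarrow> 'a set) \<Rightarrow> bool" where
  "R1 C r \<longleftrightarrow> (\<forall>c1 \<in> C. \<forall>c2 \<in> C. c1 \<noteq> c2 \<longrightarrow>
      restr c1 (r c1 \<union> r c2) \<noteq> restr c2 (r c1 \<union> r c2))"

definition R2 :: "'a set \<Rightarrow> 'a set set \<Rightarrow> ('a set \<Rightarrow> 'a set) \<Rightarrow> bool" where
  "R2 X C r \<longleftrightarrow> (\<forall>s \<in> RS X C. \<exists>!c. c \<in> C \<and> consistent c s \<and> r c \<subseteq> sdom s)"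

definition R3 :: "'a set \<Rightarrow> 'a set set \<Rightarrow> ('a set \<Rightarrow> 'a set) \<Rightarrow> bool" where
  "R3 X C r \<longleftrightarrow> (\<forall>Y T. is_cube_of X Y T \<longrightarrow> inj_on (\<lambda>c. r c \<inter> Y) (C \<inter> cube Y T))"

definition R4 :: "'a set set \<Rightarrow> ('a set \<Rightarrow> 'a set) \<Rightarrow> bool" where
  "R4 C r \<longleftrightarrow> (\<forall>c1 \<in> C. \<forall>c2 \<in> C. c1 \<noteq> c2 \<longrightarrow>
      restr c1 ((r c1 - r c2) \<union> (r c2 - r c1)) \<noteq> restr c2 ((r c1 - r c2) \<union> (r c2 - r c1)))"

definition representation_map :: "'a set \<Rightarrow> 'a set set \<Rightarrow> ('a set \<Rightarrow> 'a set) \<Rightarrow> bool" where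
  "representation_map X C r \<longleftrightarrow> bij_betw r C (shattered_sets X C) \<and> R1 C r"

definition unlabeled_SCS ::
  "'a set \<Rightarrow> 'a set set \<Rightarrow> nat \<Rightarrow> ('a sample \<Rightarrow> 'a set) \<Rightarrow> ('a set \<Rightarrow> 'a set) \<Rightarrow> bool" where
  "unlabeled_SCS X C k \<alpha> \<beta> \<longleftrightarrow> (\<forall>s \<in> RS X C.
      \<alpha> s \<subseteq> X \<and> card (\<alpha> s) \<le> k \<and> \<alpha> s \<subseteq> sdom s \<and>
      \<beta> (\<alpha> s) \<in> C \<and> consistent (\<beta> (\<alpha> s)) s)"

end

theory Submission
  imports Defs
begin

definition sh :: "'a set set \<Rightarrow> 'a set set" where "sh D = {W. shatters D W}"
definition ssh :: "'a set set \<Rightarrow> 'a set set" where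
  "ssh D = {W. \<exists>T. T \<inter> W = {} \<and> cube W T \<subseteq> D}"
definition amp :: "'a set set \<Rightarrow> bool" where "amp D \<longleftrightarrow> sh D \<subseteq> ssh D"

lemma shatters_iff: "shatters D W \<longleftrightarrow> (\<forall>Z\<subseteq>W. \<exists>c\<in>D. c \<inter> W = Z)"
  unfolding shatters_def restr_class_def restr_def
proof
  assume "(\<lambda>c. c \<inter> W) ` D = Pow W"
  then show "\<forall>Z\<subseteq>W. \<exists>c\<in>D. c \<inter> W = Z"
  proof (intro allI impI)
    fix Z assume e: "(\<lambda>c. c \<inter> W) ` D = Pow W" and "Z \<subseteq> W"
    then have "Z \<in> (\<lambda>c. c \<inter> W) ` D" by simp
    then show "\<exists>c\<in>D. c \<inter> W = Z" by blast
  qed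
next
  assume "\<forall>Z\<subseteq>W. \<exists>c\<in>D. c \<inter> W = Z"
  then show "(\<lambda>c. c \<inter> W) ` D = Pow W"
  proof (intro equalityI subsetI)
    fix Z assume "Z \<in> (\<lambda>c. c \<inter> W) ` D" then show "Z \<in> Pow W" by auto
  next
    fix Z assume h: "\<forall>Z\<subseteq>W. \<exists>c\<in>D. c \<inter> W = Z" and "Z \<in> Pow W"
    then obtain c where "c \<in> D" "c \<inter> W = Z" by auto
    then show "Z \<in> (\<lambda>c. c \<inter> W) ` D" by (intro image_eqI[of _ _ c]) auto
  qed
qed

lemma sh_iff: "W \<in> sh D \<longleftrightarrow> (\<forall>Z\<subseteq>W. \<exists>c\<in>D. c \<inter> W = Z)"
  by (simp add: sh_def shatters_iff)

lemma sh_mono: "D \<subseteq> D' \<Longrightarrow> sh D \<subseteq> sh D'"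
  unfolding sh_def shatters_iff by blast

lemma cube_iff: "c \<in> cube W T \<longleftrightarrow> (\<exists>Z\<subseteq>W. c = T \<union> Z)"
  unfolding cube_def by auto

lemma ssh_sub_sh: "ssh D \<subseteq> sh D"
proof
  fix W assume "W \<in> ssh D"
  then obtain T where T: "T \<inter> W = {}" "cube W T \<subseteq> D" unfolding ssh_def by auto
  show "W \<in> sh D" unfolding sh_iff
  proof (intro allI impI)
    fix Z assume "Z \<subseteq> W"
    then have "T \<union> Z \<in> cube W T" unfolding cube_iff by blast
    then have "T \<union> Z \<in> D" using T by blast
    moreover have "(T \<union> Z) \<inter> W = Z" using T \<open>Z \<subseteq> W\<close> by auto
    ultimately show "\<exists>c\<in>D. c \<inter> W = Z" by blast
  qed
qed

lemma sh_sub: assumes "D \<subseteq> cube F T0" shows "sh D \<subseteq> Pow F"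
proof
  fix W assume W: "W \<in> sh D"
  show "W \<in> Pow F"
  proof (rule ccontr)
    assume "W \<notin> Pow F"
    then obtain x where x: "x \<in> W" "x \<notin> F" by auto
    have all: "\<forall>Z\<subseteq>W. \<exists>c\<in>D. c \<inter> W = Z" using W by (simp only: sh_iff)
    obtain c1 where c1: "c1 \<in> D" "c1 \<inter> W = W" using all[rule_format, of W] by auto
    obtain c2 where c2: "c2 \<in> D" "c2 \<inter> W = {}" using all[rule_format, of "{}"] by auto
    have "c1 \<in> cube F T0" using c1 assms by blast
    then obtain Z1 where Z1: "Z1 \<subseteq> F" "c1 = T0 \<union> Z1" unfolding cube_iff by blast
    have "c2 \<in> cube F T0" using c2 assms by blast
    then obtain Z2 where Z2: "Z2 \<subseteq> F" "c2 = T0 \<union> Z2" unfolding cube_iff by blast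
    have "x \<in> c1" using c1 x by blast
    moreover have "x \<notin> c2" using c2 x by blast
    ultimately show False using Z1 Z2 x by blast
  qed
qed

lemma cube_mono: "F \<subseteq> F' \<Longrightarrow> cube F T \<subseteq> cube F' T"
  unfolding cube_def by blast

lemma finite_cube: "finite F \<Longrightarrow> finite (cube F T)"
proof -
  assume "finite F"
  have "cube F T = (\<lambda>Z. T \<union> Z) ` Pow F" unfolding cube_def by auto
  then show ?thesis using \<open>finite F\<close> by simp
qed

lemma ssh_empty: "ssh {} = {}"
  unfolding ssh_def cube_def by auto

lemma decomp:
  assumes F: "finite F" "x \<notin> F" and D: "D \<subseteq> cube (insert x F) T0"
  defines "D0 \<equiv> {c\<in>D. x \<notin> c}" and "D1 \<equiv> {c\<in>D. x \<in> c}"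
  shows "card D = card D0 + card D1" "D0 \<subseteq> cube F T0" "D1 \<subseteq> cube F (insert x T0)"
    "card (sh D0) + card (sh D1) \<le> card (sh D)"
    "card (ssh D) \<le> card (ssh D0) + card (ssh D1)"
proof -
  have "finite (cube (insert x F) T0)" using F(1) by (intro finite_cube) simp
  then have finD: "finite D" using D finite_subset by blast
  have "D = D0 \<union> D1" "D0 \<inter> D1 = {}" unfolding D0_def D1_def by auto
  then show "card D = card D0 + card D1"
    using finD card_Un_disjoint[of D0 D1] by (metis finite_Un)
  show D0: "D0 \<subseteq> cube F T0"
  proof
    fix c assume "c \<in> D0"
    then have "c \<in> D" "x \<notin> c" unfolding D0_def by auto
    then have "c \<in> cube (insert x F) T0" "x \<notin> c" using D by auto
    then obtain Z where "Z \<subseteq> insert x F" "c = T0 \<union> Z" "x \<notin> c" unfolding cube_iff by blast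
    then show "c \<in> cube F T0" unfolding cube_iff by (intro exI[of _ Z]) auto
  qed
  show D1: "D1 \<subseteq> cube F (insert x T0)"
  proof
    fix c assume "c \<in> D1"
    then have "c \<in> D" "x \<in> c" unfolding D1_def by auto
    then have "c \<in> cube (insert x F) T0" "x \<in> c" using D by auto
    then obtain Z where "Z \<subseteq> insert x F" "c = T0 \<union> Z" "x \<in> c" unfolding cube_iff by blast
    then show "c \<in> cube F (insert x T0)" unfolding cube_iff by (intro exI[of _ "Z - {x}"]) auto
  qed
  have s0: "sh D0 \<subseteq> Pow F" using sh_sub D0 by blast
  have s1: "sh D1 \<subseteq> Pow F" using sh_sub D1 by blast
  have sD: "sh D \<subseteq> Pow (insert x F)" using sh_sub D by blast
  have finsD: "finite (sh D)" using sD F finite_subset by (metis finite_Pow_iff finite_insert)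
  have fin0: "finite (sh D0)" using s0 F finite_subset by (metis finite_Pow_iff)
  have fin1: "finite (sh D1)" using s1 F finite_subset by (metis finite_Pow_iff)
  have "D0 \<subseteq> D" "D1 \<subseteq> D" unfolding D0_def D1_def by auto
  then have U: "sh D0 \<union> sh D1 \<subseteq> sh D" using sh_mono by blast
  have I: "insert x ` (sh D0 \<inter> sh D1) \<subseteq> sh D"
  proof
    fix V assume "V \<in> insert x ` (sh D0 \<inter> sh D1)"
    then obtain W where W: "V = insert x W" "W \<in> sh D0" "W \<in> sh D1" by auto
    show "V \<in> sh D" unfolding sh_iff
    proof (intro allI impI)
      fix Z assume Z: "Z \<subseteq> V"
      show "\<exists>c\<in>D. c \<inter> V = Z"
      proof (cases "x \<in> Z")
        case True
        then obtain c where "c \<in> D1" "c \<inter> W = Z - {x}" using W(3) Z True unfolding sh_iff by (metis Diff_subset_conv insert_is_Un W(1))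
        then show ?thesis using W True unfolding D1_def by (intro bexI[of _ c]) auto
      next
        case False
        then obtain c where "c \<in> D0" "c \<inter> W = Z" using W(2) Z False unfolding sh_iff by (metis subset_insert W(1))
        then show ?thesis using W False unfolding D0_def by (intro bexI[of _ c]) auto
      qed
    qed
  qed
  have disj: "(sh D0 \<union> sh D1) \<inter> insert x ` (sh D0 \<inter> sh D1) = {}" using s0 s1 F by auto
  have inj: "inj_on (insert x) (sh D0 \<inter> sh D1)"
  proof (rule inj_onI)
    fix V1 V2 assume "V1 \<in> sh D0 \<inter> sh D1" "V2 \<in> sh D0 \<inter> sh D1" "insert x V1 = insert x V2"
    moreover have "x \<notin> V1" "x \<notin> V2" using s0 F calculation by auto
    ultimately show "V1 = V2" using insert_ident by metis
  qed
  have "card (sh D0) + card (sh D1) = card (sh D0 \<union> sh D1) + card (sh D0 \<inter> sh D1)"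
    by (rule card_Un_Int[OF fin0 fin1])
  also have "\<dots> = card (sh D0 \<union> sh D1) + card (insert x ` (sh D0 \<inter> sh D1))"
    using card_image[OF inj] by simp
  also have "\<dots> = card ((sh D0 \<union> sh D1) \<union> insert x ` (sh D0 \<inter> sh D1))"
    using card_Un_disjoint[OF _ _ disj] fin0 fin1 by simp
  also have "\<dots> \<le> card (sh D)" using U I finsD by (intro card_mono) auto
  finally show "card (sh D0) + card (sh D1) \<le> card (sh D)" .
  have ss0: "finite (ssh D0)" using fin0 ssh_sub_sh rev_finite_subset by blast
  have ss1: "finite (ssh D1)" using fin1 ssh_sub_sh rev_finite_subset by blast
  have sub: "ssh D \<subseteq> (ssh D0 \<union> ssh D1) \<union> insert x ` (ssh D0 \<inter> ssh D1)"
  proof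
    fix W assume "W \<in> ssh D"
    then obtain T where T: "T \<inter> W = {}" "cube W T \<subseteq> D" unfolding ssh_def by auto
    show "W \<in> (ssh D0 \<union> ssh D1) \<union> insert x ` (ssh D0 \<inter> ssh D1)"
    proof (cases "x \<in> W")
      case False
      show ?thesis
      proof (cases "x \<in> T")
        case True
        have "cube W T \<subseteq> D1"
        proof
          fix c assume c: "c \<in> cube W T"
          then have "c \<in> D" using T by blast
          moreover have "x \<in> c" using c True unfolding cube_iff by blast
          ultimately show "c \<in> D1" unfolding D1_def by simp
        qed
        then show ?thesis using T unfolding ssh_def by blast
      next
        case xT: False
        have "cube W T \<subseteq> D0"
        proof
          fix c assume c: "c \<in> cube W T"
          then have "c \<in> D" using T by blast
          moreover have "x \<notin> c" using c xT False unfolding cube_iff by blast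
          ultimately show "c \<in> D0" unfolding D0_def by simp
        qed
        then show ?thesis using T unfolding ssh_def by blast
      qed
    next
      case True
      have xT: "x \<notin> T" using T True by blast
      have a: "cube (W - {x}) T \<subseteq> D0"
      proof
        fix c assume c: "c \<in> cube (W - {x}) T"
        have "cube (W - {x}) T \<subseteq> cube W T" by (rule cube_mono) blast
        then have "c \<in> D" using T c by blast
        moreover have "x \<notin> c" using c xT unfolding cube_iff by blast
        ultimately show "c \<in> D0" unfolding D0_def by simp
      qed
      have b: "cube (W - {x}) (insert x T) \<subseteq> D1"
      proof
        fix c assume c: "c \<in> cube (W - {x}) (insert x T)"
        then obtain Z where Z: "Z \<subseteq> W - {x}" "c = insert x T \<union> Z" using c unfolding cube_iff by blast
        then have "c = T \<union> insert x Z" "insert x Z \<subseteq> W" using True by auto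
        then have "c \<in> cube W T" unfolding cube_iff by blast
        then have "c \<in> D" using T by blast
        moreover have "x \<in> c" using Z by blast
        ultimately show "c \<in> D1" unfolding D1_def by simp
      qed
      have "W - {x} \<in> ssh D0" using a T unfolding ssh_def by blast
      moreover have "W - {x} \<in> ssh D1" using b T unfolding ssh_def by blast
      ultimately have "W - {x} \<in> ssh D0 \<inter> ssh D1" by blast
      moreover have "W = insert x (W - {x})" using True by blast
      ultimately have "W \<in> insert x ` (ssh D0 \<inter> ssh D1)" by (metis image_eqI)
      then show ?thesis by (rule UnI2)
    qed
  qed
  have "card (ssh D) \<le> card ((ssh D0 \<union> ssh D1) \<union> insert x ` (ssh D0 \<inter> ssh D1))"
    using sub ss0 ss1 by (intro card_mono) auto
  also have "\<dots> \<le> card (ssh D0 \<union> ssh D1) + card (insert x ` (ssh D0 \<inter> ssh D1))"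
    by (rule card_Un_le)
  also have "\<dots> \<le> card (ssh D0 \<union> ssh D1) + card (ssh D0 \<inter> ssh D1)"
    using card_image_le ss0 by auto
  also have "\<dots> = card (ssh D0) + card (ssh D1)" using card_Un_Int[OF ss0 ss1] by simp
  finally show "card (ssh D) \<le> card (ssh D0) + card (ssh D1)" .
qed

lemma pajor:
  assumes "finite F" "D \<subseteq> cube F T0"
  shows "card (ssh D) \<le> card D \<and> card D \<le> card (sh D)"
  using assms
proof (induction F arbitrary: D T0 rule: finite_induct)
  case empty
  have cb: "cube {} T0 = {T0}" unfolding cube_def by auto
  show ?case
  proof (cases "D = {}")
    case True
    then show ?thesis by (simp add: ssh_empty)
  next
    case False
    then have D: "D = {T0}" using empty.prems cb subset_singletonD by metis
    have "{} \<in> sh D" unfolding sh_iff using D by auto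
    moreover have "sh D \<subseteq> Pow {}" by (rule sh_sub[OF empty.prems])
    ultimately have "sh D = {{}}" by auto
    moreover have "ssh D \<subseteq> sh D" by (rule ssh_sub_sh)
    ultimately have "card (ssh D) \<le> card {{}::'a set}" using card_mono[of "{{}::'a set}" "ssh D"] by simp
    then have "card (ssh D) \<le> 1" by simp
    then show ?thesis using D \<open>sh D = {{}}\<close> by simp
  qed
next
  case (insert x F)
  let ?D0 = "{c\<in>D. x \<notin> c}" and ?D1 = "{c\<in>D. x \<in> c}"
  note dc = decomp[OF insert.hyps(1,2) insert.prems]
  have i0: "card (ssh ?D0) \<le> card ?D0 \<and> card ?D0 \<le> card (sh ?D0)"
    using insert.IH[OF dc(2)] .
  have i1: "card (ssh ?D1) \<le> card ?D1 \<and> card ?D1 \<le> card (sh ?D1)"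
    using insert.IH[OF dc(3)] .
  show ?case using dc(1,4,5) i0 i1 by linarith
qed

lemma amp_card:
  assumes "finite F" "D \<subseteq> cube F T0" "amp D"
  shows "card (sh D) = card D"
proof -
  have "finite (sh D)" using sh_sub[OF assms(2)] assms(1) finite_subset by (metis finite_Pow_iff)
  then have "sh D = ssh D" using assms(3) ssh_sub_sh[of D] unfolding amp_def by (metis subset_antisym)
  then show ?thesis using pajor[OF assms(1,2)] by simp
qed

lemma amp_fix:
  assumes F: "finite F" "x \<in> F" and D: "D \<subseteq> cube F T0" and a: "amp D"
  shows "amp {c\<in>D. x \<notin> c}" "amp {c\<in>D. x \<in> c}"
proof -
  let ?D0 = "{c\<in>D. x \<notin> c}" and ?D1 = "{c\<in>D. x \<in> c}"
  have F': "finite (F - {x})" "x \<notin> F - {x}" using F by auto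
  have "insert x (F - {x}) = F" using F by auto
  then have D': "D \<subseteq> cube (insert x (F - {x})) T0" using D by simp
  note dc = decomp[OF F' D']
  have p0: "card (ssh ?D0) \<le> card ?D0 \<and> card ?D0 \<le> card (sh ?D0)" by (rule pajor[OF F'(1) dc(2)])
  have p1: "card (ssh ?D1) \<le> card ?D1 \<and> card ?D1 \<le> card (sh ?D1)" by (rule pajor[OF F'(1) dc(3)])
  have "finite (sh D)" using sh_sub[OF D] F(1) finite_subset by (metis finite_Pow_iff)
  then have e: "sh D = ssh D" using a ssh_sub_sh[of D] unfolding amp_def by (metis subset_antisym)
  have f0: "finite (sh ?D0)" using sh_sub[OF dc(2)] F'(1) finite_subset by (metis finite_Pow_iff)
  have f1: "finite (sh ?D1)" using sh_sub[OF dc(3)] F'(1) finite_subset by (metis finite_Pow_iff)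
  have le0: "card (ssh ?D0) \<le> card (sh ?D0)" using card_mono[OF f0 ssh_sub_sh] .
  have le1: "card (ssh ?D1) \<le> card (sh ?D1)" using card_mono[OF f1 ssh_sub_sh] .
  have ce: "card (sh D) = card (ssh D)" using e by simp
  have "card (ssh ?D0) = card (sh ?D0)"
    using dc(1,4,5) p0 p1 le0 le1 ce by linarith
  moreover have "card (ssh ?D1) = card (sh ?D1)"
    using dc(1,4,5) p0 p1 le0 le1 ce by linarith
  ultimately have "card (ssh ?D0) = card (sh ?D0)" "card (ssh ?D1) = card (sh ?D1)" by blast+
  then have "ssh ?D0 = sh ?D0" "ssh ?D1 = sh ?D1"
    using card_subset_eq[OF f0 ssh_sub_sh] card_subset_eq[OF f1 ssh_sub_sh] by auto
  then show "amp ?D0" "amp ?D1" unfolding amp_def by auto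
qed

lemma amp_empty: "amp {}"
  unfolding amp_def sh_iff by (auto simp: sh_iff)

lemma pow_cube: "Pow X = cube X {}"
  unfolding cube_def by auto

lemma amp_fixset:
  assumes F: "finite F" and D: "D \<subseteq> cube F T0" and a: "amp D" and S: "finite S"
  shows "amp {c\<in>D. \<forall>y\<in>S. (y \<in> c) = (y \<in> T)}"
  using S
proof (induction S rule: finite_induct)
  case empty
  then show ?case using a by simp
next
  case (insert x S)
  let ?D' = "{c\<in>D. \<forall>y\<in>S. (y \<in> c) = (y \<in> T)}"
  have D': "?D' \<subseteq> cube (insert x F) T0" using D cube_mono[of F "insert x F" T0] by auto
  have F': "finite (insert x F)" "x \<in> insert x F" using F by auto
  note af = amp_fix[OF F' D' insert.IH]
  show ?case
  proof (cases "x \<in> T")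
    case True
    have "{c\<in>D. \<forall>y\<in>insert x S. (y \<in> c) = (y \<in> T)} = {c\<in>?D'. x \<in> c}" using True by auto
    then show ?thesis using af(2) by simp
  next
    case False
    have "{c\<in>D. \<forall>y\<in>insert x S. (y \<in> c) = (y \<in> T)} = {c\<in>?D'. x \<notin> c}" using False by auto
    then show ?thesis using af(1) by simp
  qed
qed

lemma cube_inter:
  assumes "C \<subseteq> Pow X" "is_cube_of X Y T"
  shows "C \<inter> cube Y T = {c\<in>C. \<forall>y\<in>X - Y. (y \<in> c) = (y \<in> T)}"
proof (intro equalityI subsetI)
  fix c assume c: "c \<in> C \<inter> cube Y T"
  then have "c \<in> cube Y T" "c \<in> C" by simp_all
  then obtain Z where Z: "Z \<subseteq> Y" "c = T \<union> Z" unfolding cube_iff by blast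
  have "\<forall>y\<in>X - Y. (y \<in> c) = (y \<in> T)" using Z by auto
  then show "c \<in> {c\<in>C. \<forall>y\<in>X - Y. (y \<in> c) = (y \<in> T)}" using \<open>c \<in> C\<close> by simp
next
  fix c assume c: "c \<in> {c\<in>C. \<forall>y\<in>X - Y. (y \<in> c) = (y \<in> T)}"
  then have cX: "c \<subseteq> X" "c \<in> C" using assms(1) by auto
  have "c = T \<union> (c \<inter> Y)"
  proof (intro equalityI subsetI)
    fix y assume "y \<in> c" then show "y \<in> T \<union> (c \<inter> Y)" using c cX by auto
  next
    fix y assume "y \<in> T \<union> (c \<inter> Y)" then show "y \<in> c" using c assms(2) unfolding is_cube_of_def by auto
  qed
  then have "c \<inter> Y \<subseteq> Y \<and> c = T \<union> (c \<inter> Y)" by (intro conjI Int_lower2)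
  then have "\<exists>Z\<subseteq>Y. c = T \<union> Z" by (rule exI)
  then have "c \<in> cube Y T" unfolding cube_iff .
  then show "c \<in> C \<inter> cube Y T" using cX by simp
qed

lemma amp_cube:
  assumes "finite X" "C \<subseteq> Pow X" "amp C" "is_cube_of X Y T"
  shows "amp (C \<inter> cube Y T)"
proof -
  have "C \<subseteq> cube X {}" using assms(2) pow_cube by metis
  moreover have "finite (X - Y)" using assms(1) by simp
  ultimately have "amp {c\<in>C. \<forall>y\<in>X - Y. (y \<in> c) = (y \<in> T)}"
    using amp_fixset assms(1,3) by blast
  then show ?thesis using cube_inter[OF assms(2,4)] by simp
qed

lemma restr_class_iff: "p \<in> restr_class D Z \<longleftrightarrow> (\<exists>c\<in>D. p = c \<inter> Z)"
  unfolding restr_class_def restr_def by auto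

lemma sh_proj: "W \<in> sh (restr_class D Z) \<longleftrightarrow> W \<subseteq> Z \<and> W \<in> sh D"
proof
  assume W: "W \<in> sh (restr_class D Z)"
  have all: "\<forall>Z'\<subseteq>W. \<exists>c\<in>restr_class D Z. c \<inter> W = Z'" using W by (simp only: sh_iff)
  obtain p where p: "p \<in> restr_class D Z" "p \<inter> W = W" using all[rule_format, of W] by auto
  then obtain c where "c \<in> D" "p = c \<inter> Z" unfolding restr_class_iff by blast
  then have WZ: "W \<subseteq> Z" using p by auto
  have "\<forall>Z'\<subseteq>W. \<exists>c\<in>D. c \<inter> W = Z'"
  proof (intro allI impI)
    fix Z' assume "Z' \<subseteq> W"
    then obtain p where p: "p \<in> restr_class D Z" "p \<inter> W = Z'" using all by blast
    then obtain c where c: "c \<in> D" "p = c \<inter> Z" unfolding restr_class_iff by blast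
    then have "c \<inter> W = Z'" using p WZ by auto
    then show "\<exists>c\<in>D. c \<inter> W = Z'" using c by blast
  qed
  then show "W \<subseteq> Z \<and> W \<in> sh D" using WZ by (simp only: sh_iff)
next
  assume W: "W \<subseteq> Z \<and> W \<in> sh D"
  have "W \<in> sh D" using W by simp
  then have all: "\<forall>Z'\<subseteq>W. \<exists>c\<in>D. c \<inter> W = Z'" by (simp only: sh_iff)
  have "\<forall>Z'\<subseteq>W. \<exists>p\<in>restr_class D Z. p \<inter> W = Z'"
  proof (intro allI impI)
    fix Z' assume "Z' \<subseteq> W"
    then obtain c where c: "c \<in> D" "c \<inter> W = Z'" using all by blast
    have "c \<inter> Z \<in> restr_class D Z" using c unfolding restr_class_iff by blast
    moreover have "(c \<inter> Z) \<inter> W = Z'" using c W by auto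
    ultimately show "\<exists>p\<in>restr_class D Z. p \<inter> W = Z'" by blast
  qed
  then show "W \<in> sh (restr_class D Z)" by (simp only: sh_iff)
qed

lemma amp_proj:
  assumes "amp D" shows "amp (restr_class D Z)"
  unfolding amp_def
proof
  fix W assume "W \<in> sh (restr_class D Z)"
  then have W: "W \<subseteq> Z" "W \<in> sh D" using sh_proj[of W D Z] by simp_all
  then have "W \<in> ssh D" using assms unfolding amp_def by blast
  then obtain T where T: "T \<inter> W = {}" "cube W T \<subseteq> D" unfolding ssh_def by blast
  have "cube W (T \<inter> Z) \<subseteq> restr_class D Z"
  proof
    fix p assume "p \<in> cube W (T \<inter> Z)"
    then obtain Z' where Z': "Z' \<subseteq> W" "p = (T \<inter> Z) \<union> Z'" unfolding cube_iff by blast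
    have "T \<union> Z' \<in> cube W T" unfolding cube_iff using Z' by blast
    then have "T \<union> Z' \<in> D" using T by blast
    moreover have "p = (T \<union> Z') \<inter> Z" using Z' W by auto
    ultimately show "p \<in> restr_class D Z" unfolding restr_class_iff by (rule bexI[rotated])
  qed
  moreover have "(T \<inter> Z) \<inter> W = {}" using T by auto
  ultimately show "W \<in> ssh (restr_class D Z)" unfolding ssh_def by blast
qed

lemma proj_sub: "restr_class D Z \<subseteq> cube Z {}"
proof
  fix p assume "p \<in> restr_class D Z"
  then obtain c where "c \<in> D" "p = c \<inter> Z" unfolding restr_class_iff by blast
  then have "p \<subseteq> Z \<and> p = {} \<union> p" by blast
  then show "p \<in> cube Z {}" unfolding cube_iff by (rule exI)
qed

lemma fiber_sum:
  assumes "finite I" "finite A" "f ` A \<subseteq> I"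
  shows "card A = (\<Sum>i\<in>I. card {a\<in>A. f a = i})"
proof -
  have "A = (\<Union>i\<in>I. {a\<in>A. f a = i})" using assms(3) by auto
  moreover have "card (\<Union>i\<in>I. {a\<in>A. f a = i}) = (\<Sum>i\<in>I. card {a\<in>A. f a = i})"
    by (rule card_UN_disjoint) (use assms in auto)
  ultimately show ?thesis by simp
qed

lemma mobius:
  fixes g h :: "'a set \<Rightarrow> nat"
  assumes Y: "finite Y" and eq: "\<And>Z. Z \<subseteq> Y \<Longrightarrow> (\<Sum>V\<in>Pow Z. g V) = (\<Sum>V\<in>Pow Z. h V)"
  shows "W \<subseteq> Y \<Longrightarrow> g W = h W"
proof (induction "card W" arbitrary: W rule: less_induct)
  case less
  have fW: "finite W" using less.prems Y finite_subset by blast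
  have "(\<Sum>V\<in>Pow W - {W}. g V) = (\<Sum>V\<in>Pow W - {W}. h V)"
  proof (rule sum.cong)
    fix V assume "V \<in> Pow W - {W}"
    then have "V \<subset> W" by auto
    then have "card V < card W" "V \<subseteq> Y" using fW less.prems psubset_card_mono by auto
    then show "g V = h V" using less.hyps by blast
  qed simp
  moreover have "(\<Sum>V\<in>Pow W. g V) = g W + (\<Sum>V\<in>Pow W - {W}. g V)"
    using fW by (intro sum.remove) auto
  moreover have "(\<Sum>V\<in>Pow W. h V) = h W + (\<Sum>V\<in>Pow W - {W}. h V)"
    using fW by (intro sum.remove) auto
  ultimately show ?case using eq[OF less.prems] by simp
qed

lemma consistent_iff:
  assumes "consistent c0 s"
  shows "consistent c s \<longleftrightarrow> c \<inter> sdom s = c0 \<inter> sdom s"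
proof
  assume h: "consistent c s"
  show "c \<inter> sdom s = c0 \<inter> sdom s"
  proof (intro equalityI subsetI)
    fix x assume x: "x \<in> c \<inter> sdom s"
    then obtain y where "(x, y) \<in> set s" unfolding sdom_def by force
    then show "x \<in> c0 \<inter> sdom s" using h assms x unfolding consistent_def by fastforce
  next
    fix x assume x: "x \<in> c0 \<inter> sdom s"
    then obtain y where "(x, y) \<in> set s" unfolding sdom_def by force
    then show "x \<in> c \<inter> sdom s" using h assms x unfolding consistent_def by fastforce
  qed
next
  assume h: "c \<inter> sdom s = c0 \<inter> sdom s"
  show "consistent c s" unfolding consistent_def
  proof (intro ballI, clarify)
    fix x y assume xy: "(x, y) \<in> set s"
    then have "x \<in> sdom s" unfolding sdom_def by force
    then have "(x \<in> c) = (x \<in> c0)" using h by blast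
    moreover have "(x \<in> c0) = y" using assms xy unfolding consistent_def by fastforce
    ultimately show "(x \<in> c) = y" by simp
  qed
qed

lemma mk_sample:
  assumes "finite D"
  shows "\<exists>s. sdom s = D \<and> consistent c0 s"
proof -
  obtain xs where xs: "set xs = D" using finite_list[OF assms] by blast
  let ?s = "map (\<lambda>x. (x, x \<in> c0)) xs"
  have "sdom ?s = D" unfolding sdom_def using xs by force
  moreover have "consistent c0 ?s" unfolding consistent_def by auto
  ultimately show ?thesis by blast
qed

lemma sh_eq:
  assumes "C \<subseteq> Pow X" shows "shattered_sets X C = sh C"
proof -
  have "C \<subseteq> cube X {}" using assms pow_cube by metis
  then have "sh C \<subseteq> Pow X" by (rule sh_sub)
  then show ?thesis unfolding shattered_sets_def sh_def by auto
qed

lemma ample_amp: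
  assumes "C \<subseteq> Pow X" "ample X C" shows "amp C"
  unfolding amp_def
proof
  fix W assume W: "W \<in> sh C"
  then have "W \<in> shattered_sets X C" using sh_eq[OF assms(1)] by simp
  then obtain T where T: "is_cube_of X W T" "cube W T \<subseteq> C" using assms(2) unfolding ample_def by blast
  then have "T \<inter> W = {}" unfolding is_cube_of_def by auto
  then show "W \<in> ssh C" using T(2) unfolding ssh_def by blast
qed

lemma uniq:
  assumes "R1 C r" "c1 \<in> C" "c2 \<in> C" "c1 \<inter> D = c2 \<inter> D" "r c1 \<subseteq> D" "r c2 \<subseteq> D"
  shows "c1 = c2"
proof (rule ccontr)
  assume ne: "c1 \<noteq> c2"
  let ?U = "r c1 \<union> r c2"
  have "restr c1 ?U \<noteq> restr c2 ?U" using assms(1,2,3) ne unfolding R1_def by blast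
  moreover have "?U \<subseteq> D" using assms(5,6) by simp
  then have "c1 \<inter> ?U = c2 \<inter> ?U" using assms(4) by blast
  ultimately show False unfolding restr_def by simp
qed

lemma exist:
  assumes X: "finite X" "C \<subseteq> Pow X" "amp C" and b: "bij_betw r C (sh C)" and R: "R1 C r"
    and D: "D \<subseteq> X" and c0: "c0 \<in> C"
  shows "\<exists>c\<in>C. c \<inter> D = c0 \<inter> D \<and> r c \<subseteq> D"
proof -
  define A where "A = {c\<in>C. r c \<subseteq> D}"
  have finD: "finite D" using X(1) D finite_subset by blast
  have injr: "inj_on r A" using b unfolding bij_betw_def A_def inj_on_def by blast
  have rA: "r ` A = {S\<in>sh C. S \<subseteq> D}"
  proof (intro equalityI subsetI)
    fix S assume "S \<in> r ` A"
    then show "S \<in> {S\<in>sh C. S \<subseteq> D}" using b unfolding A_def bij_betw_def by auto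
  next
    fix S assume S: "S \<in> {S\<in>sh C. S \<subseteq> D}"
    then have "S \<in> r ` C" using b unfolding bij_betw_def by simp
    then obtain c where "c \<in> C" "S = r c" by blast
    then show "S \<in> r ` A" using S unfolding A_def by blast
  qed
  have "{S\<in>sh C. S \<subseteq> D} = sh (restr_class C D)" using sh_proj[of _ C D] by blast
  moreover have "card (sh (restr_class C D)) = card (restr_class C D)"
    by (rule amp_card[OF finD proj_sub amp_proj[OF X(3)]])
  ultimately have cA: "card A = card (restr_class C D)"
    using card_image[OF injr] rA by simp
  have injp: "inj_on (\<lambda>c. c \<inter> D) A"
  proof (rule inj_onI)
    fix c1 c2 assume "c1 \<in> A" "c2 \<in> A" "c1 \<inter> D = c2 \<inter> D"
    then show "c1 = c2" using uniq[OF R] unfolding A_def by blast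
  qed
  have sub: "(\<lambda>c. c \<inter> D) ` A \<subseteq> restr_class C D"
    unfolding A_def restr_class_def restr_def by blast
  have fin: "finite (restr_class C D)" using proj_sub finite_cube[OF finD] finite_subset by blast
  have "card ((\<lambda>c. c \<inter> D) ` A) = card (restr_class C D)" using card_image[OF injp] cA by simp
  then have eq: "(\<lambda>c. c \<inter> D) ` A = restr_class C D" using card_subset_eq[OF fin sub] by simp
  have "c0 \<inter> D \<in> restr_class C D" using c0 unfolding restr_class_iff by blast
  then have "c0 \<inter> D \<in> (\<lambda>c. c \<inter> D) ` A" using eq by simp
  then obtain c where "c \<in> A" "c0 \<inter> D = c \<inter> D" by blast
  then show ?thesis unfolding A_def by auto
qed

lemma ex1_eq: "\<exists>!x. P x \<Longrightarrow> P a \<Longrightarrow> P b \<Longrightarrow> a = b"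
  by blast

definition R2s :: "'a set \<Rightarrow> 'a set set \<Rightarrow> ('a set \<Rightarrow> 'a set) \<Rightarrow> bool" where
  "R2s X C r \<longleftrightarrow> (\<forall>D\<subseteq>X. \<forall>c0\<in>C. \<exists>!c. c \<in> C \<and> c \<inter> D = c0 \<inter> D \<and> r c \<subseteq> D)"

lemma R2_R2s:
  assumes "finite X" shows "R2 X C r \<longleftrightarrow> R2s X C r"
proof
  assume h: "R2 X C r"
  show "R2s X C r" unfolding R2s_def
  proof (intro allI impI ballI)
    fix D c0 assume D: "D \<subseteq> X" and c0: "c0 \<in> C"
    have "finite D" using assms D finite_subset by blast
    then obtain s where s: "sdom s = D" "consistent c0 s" using mk_sample by blast
    then have "s \<in> RS X C" unfolding RS_def using D c0 by blast
    then have e: "\<exists>!c. c \<in> C \<and> consistent c s \<and> r c \<subseteq> sdom s" using h[unfolded R2_def, rule_format] by blast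
    have "\<And>c. (c \<in> C \<and> consistent c s \<and> r c \<subseteq> sdom s) \<longleftrightarrow> (c \<in> C \<and> c \<inter> D = c0 \<inter> D \<and> r c \<subseteq> D)"
      using consistent_iff[OF s(2)] s(1) by simp
    then show "\<exists>!c. c \<in> C \<and> c \<inter> D = c0 \<inter> D \<and> r c \<subseteq> D" using e by simp
  qed
next
  assume h: "R2s X C r"
  show "R2 X C r" unfolding R2_def
  proof
    fix s assume "s \<in> RS X C"
    then obtain c0 where s: "sdom s \<subseteq> X" "c0 \<in> C" "consistent c0 s" unfolding RS_def by blast
    have e: "\<exists>!c. c \<in> C \<and> c \<inter> sdom s = c0 \<inter> sdom s \<and> r c \<subseteq> sdom s"
      using h[unfolded R2s_def, rule_format, OF s(1) s(2)] .
    have "\<And>c. (c \<in> C \<and> consistent c s \<and> r c \<subseteq> sdom s) \<longleftrightarrow> (c \<in> C \<and> c \<inter> sdom s = c0 \<inter> sdom s \<and> r c \<subseteq> sdom s)"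
      using consistent_iff[OF s(3)] by simp
    then show "\<exists>!c. c \<in> C \<and> consistent c s \<and> r c \<subseteq> sdom s" using e by simp
  qed
qed

lemma R1_R2s:
  assumes X: "finite X" "C \<subseteq> Pow X" "amp C" and b: "bij_betw r C (sh C)" and R: "R1 C r"
  shows "R2s X C r"
  unfolding R2s_def
proof (intro allI impI ballI)
  fix D c0 assume D: "D \<subseteq> X" and c0: "c0 \<in> C"
  obtain c where c: "c \<in> C" "c \<inter> D = c0 \<inter> D" "r c \<subseteq> D" using exist[OF X b R D c0] by blast
  show "\<exists>!c. c \<in> C \<and> c \<inter> D = c0 \<inter> D \<and> r c \<subseteq> D"
  proof (rule ex1I[of _ c])
    show "c \<in> C \<and> c \<inter> D = c0 \<inter> D \<and> r c \<subseteq> D" using c by blast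
  next
    fix c' assume "c' \<in> C \<and> c' \<inter> D = c0 \<inter> D \<and> r c' \<subseteq> D"
    then show "c' = c" using uniq[OF R, of c' c D] c by auto
  qed
qed

lemma R2s_R1:
  assumes "\<forall>c\<in>C. r c \<subseteq> X" "R2s X C r" shows "R1 C r"
  unfolding R1_def
proof (intro ballI impI)
  fix c1 c2 assume c: "c1 \<in> C" "c2 \<in> C" "c1 \<noteq> c2"
  let ?U = "r c1 \<union> r c2"
  have U: "?U \<subseteq> X" using assms(1) c by blast
  show "restr c1 ?U \<noteq> restr c2 ?U"
  proof
    assume "restr c1 ?U = restr c2 ?U"
    then have e: "c2 \<inter> ?U = c1 \<inter> ?U" unfolding restr_def by simp
    have "\<exists>!c. c \<in> C \<and> c \<inter> ?U = c1 \<inter> ?U \<and> r c \<subseteq> ?U"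
      using assms(2)[unfolded R2s_def, rule_format, OF U c(1)] .
    moreover have "c1 \<in> C \<and> c1 \<inter> ?U = c1 \<inter> ?U \<and> r c1 \<subseteq> ?U" using c by blast
    moreover have "c2 \<in> C \<and> c2 \<inter> ?U = c1 \<inter> ?U \<and> r c2 \<subseteq> ?U" using c e by blast
    ultimately show False using c(3) ex1_eq by metis
  qed
qed

lemma R4_R1: "R4 C r \<Longrightarrow> R1 C r"
  unfolding R4_def R1_def restr_def by blast

lemma R4_inj: "R4 C r \<Longrightarrow> inj_on r C"
  unfolding R4_def restr_def inj_on_def by auto

lemma R3_R4:
  assumes "C \<subseteq> Pow X" "R3 X C r" shows "R4 C r"
  unfolding R4_def
proof (intro ballI impI)
  fix c1 c2 assume c: "c1 \<in> C" "c2 \<in> C" "c1 \<noteq> c2"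
  let ?S = "(r c1 - r c2) \<union> (r c2 - r c1)"
  let ?Y = "(c1 - c2) \<union> (c2 - c1)" and ?T = "c1 \<inter> c2"
  have cb: "is_cube_of X ?Y ?T" unfolding is_cube_of_def using c assms(1) by auto
  have "c1 - c2 \<subseteq> ?Y \<and> c1 = ?T \<union> (c1 - c2)" by blast
  then have "\<exists>Z\<subseteq>?Y. c1 = ?T \<union> Z" by (rule exI)
  then have "c1 \<in> cube ?Y ?T" unfolding cube_iff .
  have "c2 - c1 \<subseteq> ?Y \<and> c2 = ?T \<union> (c2 - c1)" by blast
  then have "\<exists>Z\<subseteq>?Y. c2 = ?T \<union> Z" by (rule exI)
  then have "c2 \<in> cube ?Y ?T" unfolding cube_iff .
  have inj: "inj_on (\<lambda>c. r c \<inter> ?Y) (C \<inter> cube ?Y ?T)" using assms(2) cb unfolding R3_def by blast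
  have "r c1 \<inter> ?Y \<noteq> r c2 \<inter> ?Y"
    using inj c \<open>c1 \<in> cube ?Y ?T\<close> \<open>c2 \<in> cube ?Y ?T\<close> unfolding inj_on_def by blast
  then obtain y where y: "y \<in> ?Y" "y \<in> ?S" by blast
  show "restr c1 ?S \<noteq> restr c2 ?S"
  proof
    assume "restr c1 ?S = restr c2 ?S"
    then have "c1 \<inter> ?S = c2 \<inter> ?S" unfolding restr_def .
    then show False using y by blast
  qed
qed

lemma R1_R3:
  assumes X: "finite X" "C \<subseteq> Pow X" "amp C" and b: "bij_betw r C (sh C)" and R: "R1 C r"
  shows "R3 X C r"
  unfolding R3_def
proof (intro allI impI)
  fix Y T assume cb: "is_cube_of X Y T"
  define E where "E = C \<inter> cube Y T"
  define \<psi> where "\<psi> c = r c \<inter> Y" for c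
  have YX: "Y \<subseteq> X" using cb unfolding is_cube_of_def by blast
  have finY: "finite Y" using YX X(1) finite_subset by blast
  have ampE: "amp E" unfolding E_def by (rule amp_cube[OF X cb])
  have finE: "finite E" unfolding E_def using X(1,2) finite_subset by (metis Int_lower1 finite_Pow_iff)
  have charE: "\<And>c. c \<in> E \<longleftrightarrow> c \<in> C \<and> (\<forall>y\<in>X - Y. (y \<in> c) = (y \<in> T))"
    unfolding E_def using cube_inter[OF X(2) cb] by blast
  have EC: "E \<subseteq> C" unfolding E_def by blast
  have rX: "\<And>c. c \<in> C \<Longrightarrow> r c \<subseteq> X"
  proof -
    fix c assume "c \<in> C"
    then have "r c \<in> sh C" using b unfolding bij_betw_def by blast
    then show "r c \<subseteq> X" using sh_eq[OF X(2)] unfolding shattered_sets_def by blast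
  qed
  have cXY: "\<And>c. c \<in> E \<Longrightarrow> c \<inter> (X - Y) = T \<inter> (X - Y)"
  proof -
    fix c assume "c \<in> E"
    then have "\<forall>y\<in>X - Y. (y \<in> c) = (y \<in> T)" using charE by blast
    then show "c \<inter> (X - Y) = T \<inter> (X - Y)" by blast
  qed
  have claim1: "card {c\<in>E. \<psi> c \<subseteq> Z} = card (restr_class E Z)" if Z: "Z \<subseteq> Y" for Z
  proof -
    define D where "D = (X - Y) \<union> Z"
    have DX: "D \<subseteq> X" unfolding D_def using Z YX by blast
    have cD: "\<And>c. c \<in> E \<Longrightarrow> c \<inter> D = (T \<inter> (X - Y)) \<union> (c \<inter> Z)"
    proof -
      fix c assume "c \<in> E"
      then have "c \<inter> (X - Y) = T \<inter> (X - Y)" by (rule cXY)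
      then show "c \<inter> D = (T \<inter> (X - Y)) \<union> (c \<inter> Z)" unfolding D_def by blast
    qed
    have inj: "inj_on (\<lambda>c. c \<inter> Z) {c\<in>E. \<psi> c \<subseteq> Z}"
    proof (rule inj_onI)
      fix c1 c2 assume c1: "c1 \<in> {c\<in>E. \<psi> c \<subseteq> Z}" and c2: "c2 \<in> {c\<in>E. \<psi> c \<subseteq> Z}"
        and e: "c1 \<inter> Z = c2 \<inter> Z"
      have "c1 \<inter> D = c2 \<inter> D" using cD c1 c2 e by simp
      moreover have "r c1 \<subseteq> D" using rX[of c1] c1 EC unfolding D_def \<psi>_def by blast
      moreover have "r c2 \<subseteq> D" using rX[of c2] c2 EC unfolding D_def \<psi>_def by blast
      moreover have "c1 \<in> C" "c2 \<in> C" using c1 c2 EC by blast+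
      ultimately show "c1 = c2" using uniq[OF R] by blast
    qed
    have img: "(\<lambda>c. c \<inter> Z) ` {c\<in>E. \<psi> c \<subseteq> Z} = restr_class E Z"
    proof (intro equalityI subsetI)
      fix p assume "p \<in> (\<lambda>c. c \<inter> Z) ` {c\<in>E. \<psi> c \<subseteq> Z}"
      then show "p \<in> restr_class E Z" unfolding restr_class_def restr_def by blast
    next
      fix p assume "p \<in> restr_class E Z"
      then obtain c0 where c0: "c0 \<in> E" "p = c0 \<inter> Z" unfolding restr_class_iff by blast
      have "c0 \<in> C" using c0 EC by blast
      then obtain c where c: "c \<in> C" "c \<inter> D = c0 \<inter> D" "r c \<subseteq> D"
        using exist[OF X b R DX] by blast
      have "\<forall>y\<in>X - Y. (y \<in> c) = (y \<in> T)"
      proof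
        fix y assume y: "y \<in> X - Y"
        then have "y \<in> D" unfolding D_def by blast
        then have "(y \<in> c) = (y \<in> c0)" using c(2) by blast
        moreover have "(y \<in> c0) = (y \<in> T)" using c0(1) charE y by blast
        ultimately show "(y \<in> c) = (y \<in> T)" by simp
      qed
      then have cE: "c \<in> E" using charE c(1) by blast
      have "\<psi> c \<subseteq> Z" using c(3) unfolding \<psi>_def D_def by blast
      moreover have "c \<inter> Z = p" using c(2) c0(2) unfolding D_def by blast
      ultimately show "p \<in> (\<lambda>c. c \<inter> Z) ` {c\<in>E. \<psi> c \<subseteq> Z}" using cE by blast
    qed
    show ?thesis using card_image[OF inj] img by simp
  qed
  have claim2: "card (restr_class E Z) = card {W\<in>sh E. W \<subseteq> Z}" if Z: "Z \<subseteq> Y" for Z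
  proof -
    have finZ: "finite Z" using Z finY finite_subset by blast
    have "card (sh (restr_class E Z)) = card (restr_class E Z)"
      by (rule amp_card[OF finZ proj_sub amp_proj[OF ampE]])
    moreover have "sh (restr_class E Z) = {W\<in>sh E. W \<subseteq> Z}" using sh_proj[of _ E Z] by blast
    ultimately show ?thesis by simp
  qed
  have shE: "sh E \<subseteq> Pow Y" using sh_sub[of E Y T] unfolding E_def by blast
  have sums: "(\<Sum>V\<in>Pow Z. card {c\<in>E. \<psi> c = V}) = (\<Sum>V\<in>Pow Z. card {W\<in>sh E. W = V})"
    if Z: "Z \<subseteq> Y" for Z
  proof -
    have finZ: "finite Z" using Z finY finite_subset by blast
    have fa: "finite {c\<in>E. \<psi> c \<subseteq> Z}" using finE by simp
    have "card {c\<in>E. \<psi> c \<subseteq> Z} = (\<Sum>V\<in>Pow Z. card {a\<in>{c\<in>E. \<psi> c \<subseteq> Z}. \<psi> a = V})"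
      by (rule fiber_sum) (use finZ fa in auto)
    also have "\<dots> = (\<Sum>V\<in>Pow Z. card {c\<in>E. \<psi> c = V})"
      by (rule sum.cong) (auto intro!: arg_cong[where f=card])
    finally have s1: "card {c\<in>E. \<psi> c \<subseteq> Z} = (\<Sum>V\<in>Pow Z. card {c\<in>E. \<psi> c = V})" .
    have fb: "finite {W\<in>sh E. W \<subseteq> Z}" using shE finY finite_subset by (metis (no_types, lifting) finite_Pow_iff mem_Collect_eq subsetI subset_iff)
    have "card {W\<in>sh E. W \<subseteq> Z} = (\<Sum>V\<in>Pow Z. card {a\<in>{W\<in>sh E. W \<subseteq> Z}. id a = V})"
      by (rule fiber_sum) (use finZ fb in auto)
    also have "\<dots> = (\<Sum>V\<in>Pow Z. card {W\<in>sh E. W = V})"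
      by (rule sum.cong) (auto intro!: arg_cong[where f=card])
    finally have s2: "card {W\<in>sh E. W \<subseteq> Z} = (\<Sum>V\<in>Pow Z. card {W\<in>sh E. W = V})" .
    show ?thesis using s1 s2 claim1[OF Z] claim2[OF Z] by simp
  qed
  have gh: "card {c\<in>E. \<psi> c = W} = card {W'\<in>sh E. W' = W}" if "W \<subseteq> Y" for W
    using mobius[OF finY sums that] .
  have le1: "card {c\<in>E. \<psi> c = W} \<le> 1" if "W \<subseteq> Y" for W
  proof -
    have "{W'\<in>sh E. W' = W} \<subseteq> {W}" by blast
    then have "card {W'\<in>sh E. W' = W} \<le> card {W}" by (intro card_mono) auto
    then show ?thesis using gh[OF that] by simp
  qed
  show "inj_on (\<lambda>c. r c \<inter> Y) (C \<inter> cube Y T)"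
  proof (rule inj_onI)
    fix c1 c2 assume c1: "c1 \<in> C \<inter> cube Y T" and c2: "c2 \<in> C \<inter> cube Y T" and e: "r c1 \<inter> Y = r c2 \<inter> Y"
    show "c1 = c2"
    proof (rule ccontr)
      assume ne: "c1 \<noteq> c2"
      let ?W = "\<psi> c1"
      have WY: "?W \<subseteq> Y" unfolding \<psi>_def by blast
      have "{c1, c2} \<subseteq> {c\<in>E. \<psi> c = ?W}" using c1 c2 e unfolding E_def \<psi>_def by auto
      then have "card {c1, c2} \<le> card {c\<in>E. \<psi> c = ?W}" by (intro card_mono) (use finE in auto)
      then have "2 \<le> card {c\<in>E. \<psi> c = ?W}" using ne by simp
      then show False using le1[OF WY] by simp
    qed
  qed
qed

theorem theorem6p1:
  fixes X :: "'a set" and C :: "'a set set"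
  assumes "finite X" and "C \<subseteq> Pow X" and "ample X C"
  shows "(\<forall>r. bij_betw r C (shattered_sets X C) \<longrightarrow>
            (R1 C r \<longleftrightarrow> R2 X C r) \<and> (R1 C r \<longleftrightarrow> R3 X C r) \<and> (R1 C r \<longleftrightarrow> R4 C r))
       \<and> (\<forall>r. (\<forall>c \<in> C. r c \<in> shattered_sets X C) \<and> R4 C r \<longrightarrow>
            bij_betw r C (shattered_sets X C) \<and> representation_map X C r)
       \<and> (\<forall>r. representation_map X C r \<longrightarrow>
            (\<exists>\<alpha> \<beta>. unlabeled_SCS X C (vc_dim X C) \<alpha> \<beta>))"
proof -
  have ampC: "amp C" by (rule ample_amp[OF assms(2,3)])
  have sheq: "shattered_sets X C = sh C" by (rule sh_eq[OF assms(2)])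
  have Xh: "finite X" "C \<subseteq> Pow X" "amp C" using assms ampC by blast+
  have Ccube: "C \<subseteq> cube X {}" using assms(2) pow_cube by metis
  have finsh: "finite (sh C)" using sh_sub[OF Ccube] assms(1) finite_subset by (metis finite_Pow_iff)
  have cardC: "card (sh C) = card C" by (rule amp_card[OF assms(1) Ccube ampC])
  have shX: "sh C \<subseteq> Pow X" using sh_sub[OF Ccube] .
  have main: "(R1 C r \<longleftrightarrow> R2 X C r) \<and> (R1 C r \<longleftrightarrow> R3 X C r) \<and> (R1 C r \<longleftrightarrow> R4 C r)"
    if b: "bij_betw r C (sh C)" for r
  proof -
    have rX: "\<forall>c\<in>C. r c \<subseteq> X" using b shX unfolding bij_betw_def by blast
    have a: "R1 C r \<Longrightarrow> R2 X C r" using R1_R2s[OF Xh b] R2_R2s[OF assms(1)] by blast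
    have bb: "R2 X C r \<Longrightarrow> R1 C r" using R2s_R1[OF rX] R2_R2s[OF assms(1)] by blast
    have c: "R1 C r \<Longrightarrow> R3 X C r" using R1_R3[OF Xh b] by blast
    have d: "R3 X C r \<Longrightarrow> R4 C r" using R3_R4[OF assms(2)] by blast
    show ?thesis using a bb c d R4_R1 by blast
  qed
  have part1: "\<forall>r. bij_betw r C (shattered_sets X C) \<longrightarrow>
            (R1 C r \<longleftrightarrow> R2 X C r) \<and> (R1 C r \<longleftrightarrow> R3 X C r) \<and> (R1 C r \<longleftrightarrow> R4 C r)"
  proof (intro allI impI)
    fix r assume "bij_betw r C (shattered_sets X C)"
    then have "bij_betw r C (sh C)" using sheq by simp
    then show "(R1 C r \<longleftrightarrow> R2 X C r) \<and> (R1 C r \<longleftrightarrow> R3 X C r) \<and> (R1 C r \<longleftrightarrow> R4 C r)" by (rule main)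
  qed
  have part2: "\<forall>r. (\<forall>c \<in> C. r c \<in> shattered_sets X C) \<and> R4 C r \<longrightarrow>
            bij_betw r C (shattered_sets X C) \<and> representation_map X C r"
  proof (intro allI impI)
    fix r assume h: "(\<forall>c \<in> C. r c \<in> shattered_sets X C) \<and> R4 C r"
    have inj: "inj_on r C" using R4_inj h by blast
    have sub: "r ` C \<subseteq> sh C" using h sheq by auto
    have "card (r ` C) = card (sh C)" using card_image[OF inj] cardC by simp
    then have "r ` C = sh C" using card_subset_eq[OF finsh sub] by simp
    then have bij: "bij_betw r C (shattered_sets X C)" using inj sheq unfolding bij_betw_def by simp
    moreover have "R1 C r" using R4_R1 h by blast
    ultimately show "bij_betw r C (shattered_sets X C) \<and> representation_map X C r"
      unfolding representation_map_def by blast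
  qed
  have part3: "\<forall>r. representation_map X C r \<longrightarrow> (\<exists>\<alpha> \<beta>. unlabeled_SCS X C (vc_dim X C) \<alpha> \<beta>)"
  proof (intro allI impI)
    fix r assume h: "representation_map X C r"
    have b: "bij_betw r C (sh C)" using h sheq unfolding representation_map_def by simp
    have R: "R1 C r" using h unfolding representation_map_def by blast
    have R2: "R2 X C r" using main[OF b] R by blast
    have inj: "inj_on r C" using b unfolding bij_betw_def by blast
    define \<alpha> where "\<alpha> s = r (THE c. c \<in> C \<and> consistent c s \<and> r c \<subseteq> sdom s)" for s
    define \<beta> where "\<beta> = the_inv_into C r"
    have "unlabeled_SCS X C (vc_dim X C) \<alpha> \<beta>"
      unfolding unlabeled_SCS_def
    proof
      fix s assume s: "s \<in> RS X C"
      let ?c = "THE c. c \<in> C \<and> consistent c s \<and> r c \<subseteq> sdom s"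
      have e: "\<exists>!c. c \<in> C \<and> consistent c s \<and> r c \<subseteq> sdom s" using R2[unfolded R2_def, rule_format, OF s] .
      have c: "?c \<in> C \<and> consistent ?c s \<and> r ?c \<subseteq> sdom s" by (rule theI'[OF e])
      have a: "\<alpha> s = r ?c" unfolding \<alpha>_def by simp
      have rsh: "r ?c \<in> sh C" using b c unfolding bij_betw_def by blast
      have fcard: "finite (card ` shattered_sets X C)" using finsh sheq by simp
      have "card (r ?c) \<in> card ` shattered_sets X C" using rsh sheq by simp
      then have "card (r ?c) \<le> vc_dim X C" unfolding vc_dim_def using Max_ge[OF fcard] by blast
      moreover have "r ?c \<subseteq> X" using rsh shX by blast
      moreover have "\<beta> (\<alpha> s) = ?c" unfolding a \<beta>_def using the_inv_into_f_f[OF inj] c by blast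
      ultimately show "\<alpha> s \<subseteq> X \<and> card (\<alpha> s) \<le> vc_dim X C \<and> \<alpha> s \<subseteq> sdom s \<and>
          \<beta> (\<alpha> s) \<in> C \<and> consistent (\<beta> (\<alpha> s)) s" using a c by simp
    qed
    then show "\<exists>\<alpha> \<beta>. unlabeled_SCS X C (vc_dim X C) \<alpha> \<beta>" by blast
  qed
  show ?thesis using part1 part2 part3 by blast
qed

end
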